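(* Let $E$ be a realizable matrix and let $A$ be a $(0,1)$ matrix such that $A$ and $A+E$ are Gram mates. Then for every $\mathbf x\in\mathrm{Row}(E)$ we have $A\mathbf x\in\mathrm{Col}(E)$, and for every $\mathbf y\in\mathrm{Col}(E)$ we have $A^T\mathbf y\in\mathrm{Row}(E)$.
   Context: Two $(0,1)$ matrices $A,B$ are Gram mates if $AA^T=BB^T$, $A^TA=B^TB$ and $A\neq B$. A $(0,1,-1)$ matrix $E$ with $E\mathbf 1=0$ and $\mathbf 1^TE=0^T$ is realizable if there is a $(0,1)$ matrix $A$ such that $A$ and $A+E$ are Gram mates. $\mathrm{Row}(E)$, $\mathrm{Col}(E)$ denote the row space and column space of $E$ (as subspaces of the appropriate $\mathbb R^n$, $\mathbb R^m$). *)

theory Defs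
  imports "HOL-Analysis.Analysis"
begin

definition zero_one_matrix :: "real^'n^'m \<Rightarrow> bool" where
  "zero_one_matrix A \<longleftrightarrow> (\<forall>i j. A$i$j = 0 \<or> A$i$j = 1)"

definition gram_mates :: "real^'n^'m \<Rightarrow> real^'n^'m \<Rightarrow> bool" where
  "gram_mates A B \<longleftrightarrow> zero_one_matrix A \<and> zero_one_matrix B \<and>
     A ** transpose A = B ** transpose B \<and>
     transpose A ** A = transpose B ** B \<and> A \<noteq> B"

definition realizable :: "real^'n^'m \<Rightarrow> bool" where
  "realizable E \<longleftrightarrow>
     (\<forall>i j. E$i$j = 0 \<or> E$i$j = 1 \<or> E$i$j = -1) \<and>
     E *v (\<chi> j. 1) = 0 \<and> (\<chi> i. 1) v* E = 0 \<and>
     (\<exists>A. zero_one_matrix A \<and> gram_mates A (A + E))"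

definition row_space :: "real^'n^'m \<Rightarrow> (real^'n) set" where
  "row_space E = span (rows E)"

definition col_space :: "real^'n^'m \<Rightarrow> (real^'m) set" where
  "col_space E = span (columns E)"

end

theory Submission
  imports Defs
begin

lemma mat_rdist: "((A::real^'n^'m) + B) ** (C::real^'p^'n) = A ** C + B ** C"
  by (vector matrix_matrix_mult_def sum.distrib[symmetric] field_simps)

lemma mat_negr: "(A::real^'n^'m) ** (- (B::real^'p^'n)) = - (A ** B)"
  by (vector matrix_matrix_mult_def sum_negf[symmetric])

lemma transpose_add: "transpose ((A::real^'n^'m) + B) = transpose A + transpose B"
  by (simp add: transpose_def vec_eq_iff)

lemma cancel_aux: "(a::'a::ab_group_add) = a + b + c \<Longrightarrow> b = - c"
  by (metis add.assoc add_cancel_left_right neg_eq_iff_add_eq_0 add.commute)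

lemma key_rows:
  fixes E A :: "real^'n^'m"
  assumes h: "A ** transpose E = E ** (- transpose (A + E))"
    and x: "x \<in> span (rows E)"
  shows "A *v x \<in> span (columns E)"
  using x
proof (induction rule: span_induct)
  case (step r)
  then obtain i where r: "r = row i E" by (auto simp: rows_def)
  have "r = transpose E *v axis i 1"
    by (simp only: r matrix_vector_mult_basis column_transpose)
  then have "A *v r = (A ** transpose E) *v axis i 1"
    by (simp only: matrix_vector_mul_assoc)
  also have "\<dots> = E *v ((- transpose (A + E)) *v axis i 1)"
    by (simp only: h matrix_vector_mul_assoc)
  finally show ?case by (simp add: matrix_vector_mult_in_columnspace)
next
  case base
  show ?case
    unfolding subspace_def
    by (simp add: matrix_vector_right_distrib matrix_vector_mult_scaleR span_add span_scale span_zero)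
qed

theorem proposition3p3:
  fixes E A :: "real^'n^'m"
  assumes "realizable E"
    and "zero_one_matrix A"
    and "gram_mates A (A + E)"
  shows "(\<forall>x \<in> row_space E. A *v x \<in> col_space E) \<and>
         (\<forall>y \<in> col_space E. transpose A *v y \<in> row_space E)"
proof -
  have g1: "A ** transpose A = (A + E) ** transpose (A + E)"
    and g2: "transpose A ** A = transpose (A + E) ** (A + E)"
    using assms(3) by (auto simp: gram_mates_def)
  have h1: "A ** transpose E = E ** (- transpose (A + E))"
  proof -
    have "(A + E) ** transpose (A + E) = A ** transpose A + A ** transpose E + E ** transpose (A + E)"
      by (simp add: matrix_add_ldistrib mat_rdist transpose_add add.assoc)
    with g1 show ?thesis
      by (simp add: mat_negr cancel_aux)
  qed
  have h2: "transpose A ** transpose (transpose E) = transpose E ** (- transpose (transpose A + transpose E))"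
  proof -
    have "transpose (A + E) ** (A + E) = transpose A ** A + transpose A ** E + transpose E ** (A + E)"
      by (simp add: matrix_add_ldistrib mat_rdist transpose_add add.assoc)
    with g2 have "transpose A ** E = - (transpose E ** (A + E))"
      by (metis cancel_aux)
    then show ?thesis
      by (simp only: transpose_transpose mat_negr transpose_add)
  qed
  show ?thesis
    unfolding row_space_def col_space_def
  proof safe
    fix x assume "x \<in> span (rows E)"
    then show "A *v x \<in> span (columns E)" using key_rows[OF h1] by blast
  next
    fix y assume "y \<in> span (columns E)"
    then have "y \<in> span (rows (transpose E))" by (simp add: rows_transpose)
    from key_rows[OF h2 this] show "transpose A *v y \<in> span (rows E)"
      by (simp add: columns_transpose)
  qed
qed

end
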